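(* Let $n\ge 3$ be an odd integer. Then for all $m\in\{3,\ldots,n-1\}$ with $\gcd(m,n)=1$ and $m\neq (n+1)/2$, we have $S(2,n)>S(m,n)$.
   Context: For integers $m,n$ with $n\neq 0$ and $\gcd(m,n)=1$, the Dedekind sum is $s(m,n)=\sum_{j=1}^{|n|}((j/n))((mj/n))$, where $((t))=t-\lfloor t\rfloor-1/2$ if $t\in\mathbb{R}\setminus\mathbb{Z}$ and $((t))=0$ if $t\in\mathbb{Z}$. Define $S(m,n)=12\,s(m,n)$. *)

theory Defs
  imports Complex_Main
begin

definition sawtooth :: "real \<Rightarrow> real" where
  "sawtooth t = (if t \<in> \<int> then 0 else t - of_int \<lfloor>t\<rfloor> - 1/2)"

definition dedekind_sum :: "int \<Rightarrow> int \<Rightarrow> real" where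
  "dedekind_sum m n = (\<Sum>j=1..\<bar>n\<bar>. sawtooth (of_int j / of_int n) * sawtooth (of_int (m*j) / of_int n))"

definition S :: "int \<Rightarrow> int \<Rightarrow> real" where
  "S m n = 12 * dedekind_sum m n"

end

theory Submission
  imports Defs
begin

lemma sum_lin: "k \<ge> 0 \<Longrightarrow> 2 * (\<Sum>j=1..k. j) = k*(k+1::int)"
proof (induction k rule: int_ge_induct)
  case base then show ?case by simp
next
  case (step i) 
  have "{1..i+1} = insert (i+1) {1..i}" using step by (auto)
  then show ?case using step by (simp add: algebra_simps)
qed

lemma sum_sq: "k \<ge> 0 \<Longrightarrow> 6 * (\<Sum>j=1..k. j^2) = k*(k+1)*(2*k+1::int)"
proof (induction k rule: int_ge_induct)
  case base then show ?case by simp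
next
  case (step i) 
  have "{1..i+1} = insert (i+1) {1..i}" using step by (auto)
  then show ?case using step by (simp add: algebra_simps power2_eq_square)
qed

lemma sawtooth_int_div:
  fixes x k :: int assumes "k > 0"
  shows "sawtooth (of_int x / of_int k) = (if k dvd x then 0 else (2*of_int (x mod k) - of_int k) / (2*of_int k))"
proof (cases "k dvd x")
  case True
  then obtain q where "x = k*q" by auto
  then have "of_int x / of_int k = (of_int q::real)" using assms by simp
  then show ?thesis using True by (simp add: sawtooth_def)
next
  case False
  have ni: "of_int x / of_int k \<notin> (\<int>::real set)"
  proof
    assume "of_int x / of_int k \<in> (\<int>::real set)"
    then obtain z where "of_int x / of_int k = (of_int z::real)" by (metis Ints_cases)
    then have "(of_int x::real) = of_int (k*z)" using assms by (simp add: field_simps)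
    then have "x = k*z" by (simp only: of_int_eq_iff)
    then show False using False by auto
  qed
  have fl: "\<lfloor>(of_int x::real) / of_int k\<rfloor> = x div k" by (rule floor_divide_of_int_eq)
  have xe: "(of_int x::real) / of_int k - of_int (x div k) = of_int (x mod k) / of_int k"
  proof -
    have "(of_int x::real) = of_int k * of_int (x div k) + of_int (x mod k)"
      by (metis of_int_add of_int_mult mult_div_mod_eq)
    then show ?thesis using assms by (simp add: field_simps)
  qed
  have "sawtooth (of_int x / of_int k) = of_int x / of_int k - of_int (x div k) - 1/2"
    using ni fl by (simp add: sawtooth_def)
  also have "\<dots> = of_int (x mod k) / of_int k - 1/2" using xe by simp
  also have "\<dots> = (2*of_int (x mod k) - of_int k) / (2*of_int k)"
    using assms by (simp add: field_simps)
  finally show ?thesis using False by simp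
qed

lemma perm_mod:
  fixes h k :: int assumes "k > 0" "coprime h k"
  shows "bij_betw (\<lambda>j. (h*j) mod k) {1..k-1} {1..k-1}"
proof -
  have inj: "inj_on (\<lambda>j. (h*j) mod k) {1..k-1}"
  proof (rule inj_onI)
    fix a b assume a: "a \<in> {1..k-1}" and b: "b \<in> {1..k-1}" and e: "(h*a) mod k = (h*b) mod k"
    then have "k dvd h*a - h*b" by (simp add: mod_eq_dvd_iff)
    then have "k dvd h*(a-b)" by (simp add: algebra_simps)
    then have "k dvd a - b" using assms(2) by (metis coprime_commute coprime_dvd_mult_right_iff)
    then obtain q where q: "a - b = k*q" by auto
    have "q = 0"
    proof (rule ccontr)
      assume "q \<noteq> 0"
      then have "\<bar>k*q\<bar> \<ge> k" using assms(1) by (simp add: abs_mult)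
      then show False using a b q by auto
    qed
    then show "a = b" using q by simp
  qed
  have sub: "(\<lambda>j. (h*j) mod k) ` {1..k-1} \<subseteq> {1..k-1}"
  proof
    fix y assume "y \<in> (\<lambda>j. (h*j) mod k) ` {1..k-1}"
    then obtain j where j: "j \<in> {1..k-1}" "y = (h*j) mod k" by auto
    have "\<not> k dvd h*j"
    proof
      assume "k dvd h*j"
      then have "k dvd j" using assms(2) by (metis coprime_commute coprime_dvd_mult_right_iff)
      then show False using j(1) by (auto dest: zdvd_imp_le)
    qed
    then have "y \<noteq> 0" using j by auto
    moreover have "0 \<le> y" "y < k" using j assms by auto
    ultimately show "y \<in> {1..k-1}" by auto
  qed
  show ?thesis using endo_inj_surj[OF _ sub inj] inj by (simp add: bij_betw_def)
qed

lemma sum_perm: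
  fixes h k :: int assumes "k > 0" "coprime h k"
  shows "(\<Sum>j=1..k-1. \<phi> ((h*j) mod k)) = (\<Sum>j=1..k-1. \<phi> j)"
  using sum.reindex_bij_betw[OF perm_mod[OF assms], of \<phi>] by simp

lemma le_div_iff_int: "(k::int) > 0 \<Longrightarrow> i \<le> x div k \<longleftrightarrow> k*i \<le> x"
proof -
  assume k: "k > 0"
  have a: "k*(x div k) \<le> x" using k
    by (metis add.right_neutral add_left_mono mult_div_mod_eq pos_mod_sign)
  have b: "x < k*(x div k) + k" using k
    by (metis add_strict_left_mono mult_div_mod_eq pos_mod_bound)
  show ?thesis
  proof
    assume "i \<le> x div k"
    then have "k*i \<le> k*(x div k)" using k by simp
    then show "k*i \<le> x" using a by simp
  next
    assume "k*i \<le> x"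
    then have "k*i < k*(x div k + 1)" using b by (simp add: algebra_simps)
    then have "i < x div k + 1" using k by simp
    then show "i \<le> x div k" by simp
  qed
qed

lemma sum_lin1: "k \<ge> 1 \<Longrightarrow> 2 * (\<Sum>j=1..k-1. j) = (k-1)*(k::int)"
  using sum_lin[of "k-1"] by simp

lemma sum_sq1: "k \<ge> 1 \<Longrightarrow> 6 * (\<Sum>j=1..k-1. j^2) = (k-1)*k*(2*k-1::int)"
  using sum_sq[of "k-1"] by (simp add: algebra_simps)

definition R :: "int \<Rightarrow> int \<Rightarrow> int" where
  "R h k = (\<Sum>j=1..k-1. j*((h*j) mod k))"

lemma not_dvd_prod:
  fixes h k j :: int assumes "k > 0" "coprime h k" "j \<in> {1..k-1}"
  shows "\<not> k dvd h*j"
proof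
  assume "k dvd h*j"
  then have "k dvd j" using assms(2) by (metis coprime_commute coprime_dvd_mult_right_iff)
  then show False using assms(3) by (auto dest: zdvd_imp_le)
qed

lemma ds_formula:
  fixes h k :: int assumes k: "k > 0" and c: "coprime h k"
  shows "dedekind_sum h k = of_int (\<Sum>j=1..k-1. (2*j-k)*(2*((h*j) mod k)-k)) / (4*of_int k^2)"
proof -
  have ins: "{1..k} = insert k {1..k-1}" using k by auto
  have kk: "sawtooth (of_int k / of_int k) = 0" using sawtooth_int_div[OF k, of k] by simp
  have "dedekind_sum h k = (\<Sum>j=1..k-1. sawtooth (of_int j / of_int k) * sawtooth (of_int (h*j) / of_int k))"
    unfolding dedekind_sum_def using k ins kk by simp
  also have "\<dots> = (\<Sum>j=1..k-1. of_int ((2*j-k)*(2*((h*j) mod k)-k)) / (4*of_int k^2))"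
  proof (rule sum.cong)
    fix j assume j: "j \<in> {1..k-1}"
    have n1: "\<not> k dvd j" using not_dvd_prod[OF k _ j, of 1] by simp
    have n2: "\<not> k dvd h*j" using not_dvd_prod[OF k c j] .
    have jm: "j mod k = j" using j by simp
    have "sawtooth (of_int j / of_int k) * sawtooth (of_int (h*j) / of_int k)
        = ((2*of_int j - of_int k) / (2*of_int k)) * ((2*of_int ((h*j) mod k) - of_int k) / (2*of_int k))"
      using sawtooth_int_div[OF k, of j] sawtooth_int_div[OF k, of "h*j"] n1 n2 jm by simp
    also have "\<dots> = of_int ((2*j-k)*(2*((h*j) mod k)-k)) / (4*of_int k^2)"
      using k by (simp add: field_simps power2_eq_square)
    finally show "sawtooth (of_int j / of_int k) * sawtooth (of_int (h*j) / of_int k) = of_int ((2*j-k)*(2*((h*j) mod k)-k)) / (4*of_int k^2)" .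
  qed simp
  also have "\<dots> = of_int (\<Sum>j=1..k-1. (2*j-k)*(2*((h*j) mod k)-k)) / (4*of_int k^2)"
    by (simp add: sum_divide_distrib)
  finally show ?thesis .
qed

lemma D_formula:
  fixes h k :: int assumes k: "k > 0" and c: "coprime h k"
  shows "(\<Sum>j=1..k-1. (2*j-k)*(2*((h*j) mod k)-k)) = 4 * R h k - k^2*(k-1)"
proof -
  have e: "\<And>j. (2*j-k)*(2*((h*j) mod k)-k) = 4*(j*((h*j) mod k)) - 2*k*j - 2*k*((h*j) mod k) + k^2"
    by (simp add: algebra_simps power2_eq_square)
  have "(\<Sum>j=1..k-1. (2*j-k)*(2*((h*j) mod k)-k)) = 4 * R h k - 2*k*(\<Sum>j=1..k-1. j) - 2*k*(\<Sum>j=1..k-1. (h*j) mod k) + (\<Sum>j=1..k-1. k^2)"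
    unfolding e R_def by (simp add: sum.distrib sum_subtractf sum_distrib_left)
  also have "(\<Sum>j=1..k-1. (h*j) mod k) = (\<Sum>j=1..k-1. j)" using sum_perm[OF k c, of "\<lambda>x. x"] by simp
  also have "(\<Sum>j=1..k-1. k^2) = (k-1)*k^2" using k by simp
  finally show ?thesis using sum_lin1[of k] k by (simp add: algebra_simps power2_eq_square)
qed

lemma S_formula:
  fixes h k :: int assumes k: "k > 0" and c: "coprime h k"
  shows "S h k = 3 * of_int (4 * R h k - k^2*(k-1)) / of_int k^2"
  unfolding S_def ds_formula[OF k c] D_formula[OF k c] using k by (simp add: field_simps)

lemma e1:
  fixes h k :: int
  shows "R h k = h * (\<Sum>j=1..k-1. j^2) - k * (\<Sum>j=1..k-1. j*((h*j) div k))"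
proof -
  have "\<And>j. j*((h*j) mod k) = h*j^2 - k*(j*((h*j) div k))"
    by (simp add: minus_div_mult_eq_mod[symmetric] algebra_simps power2_eq_square)
  then show ?thesis unfolding R_def by (simp add: sum_subtractf sum_distrib_left)
qed

lemma e4:
  fixes h k :: int assumes h: "h > 0" and c: "coprime k h"
  shows "h^2 * (\<Sum>i=1..h-1. (k*i div h)^2) = (k^2+1) * (\<Sum>i=1..h-1. i^2) - 2*k*R k h"
proof -
  have "\<And>i. h^2 * (k*i div h)^2 = k^2*i^2 - 2*k*(i*((k*i) mod h)) + ((k*i) mod h)^2"
  proof -
    fix i
    have "h*(k*i div h) = k*i - (k*i) mod h" by (simp add: minus_mod_eq_mult_div)
    then have "(h*(k*i div h))^2 = (k*i - (k*i) mod h)^2" by simp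
    then show "h^2 * (k*i div h)^2 = k^2*i^2 - 2*k*(i*((k*i) mod h)) + ((k*i) mod h)^2"
      by (simp add: algebra_simps power2_eq_square)
  qed
  then have "h^2 * (\<Sum>i=1..h-1. (k*i div h)^2) = k^2*(\<Sum>i=1..h-1. i^2) - 2*k*R k h + (\<Sum>i=1..h-1. ((k*i) mod h)^2)"
    unfolding R_def by (simp add: sum_distrib_left sum.distrib sum_subtractf)
  also have "(\<Sum>i=1..h-1. ((k*i) mod h)^2) = (\<Sum>i=1..h-1. i^2)"
    using sum_perm[OF h c, of "\<lambda>x. x^2"] by simp
  finally show ?thesis by (simp add: algebra_simps)
qed

lemma e5:
  fixes h k :: int assumes h: "h > 0" and c: "coprime k h"
  shows "2 * (\<Sum>i=1..h-1. (k*i div h)) = (k-1)*(h-1)"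
proof -
  have "\<And>i. h * (k*i div h) = k*i - (k*i) mod h" by (simp add: minus_mod_eq_mult_div)
  then have "h * (\<Sum>i=1..h-1. (k*i div h)) = k*(\<Sum>i=1..h-1. i) - (\<Sum>i=1..h-1. (k*i) mod h)"
    by (simp add: sum_distrib_left sum_subtractf)
  also have "(\<Sum>i=1..h-1. (k*i) mod h) = (\<Sum>i=1..h-1. i)"
    using sum_perm[OF h c, of "\<lambda>x. x"] by simp
  finally have "2*(h * (\<Sum>i=1..h-1. (k*i div h))) = (k-1)*(2*(\<Sum>i=1..h-1. i))" by (simp add: algebra_simps)
  also have "\<dots> = (k-1)*((h-1)*h)" using sum_lin1[of h] h by simp
  finally have "h*(2 * (\<Sum>i=1..h-1. (k*i div h))) = h*((k-1)*(h-1))" by (simp add: algebra_simps)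
  then show ?thesis using h by simp
qed

lemma lattice:
  fixes h k :: int assumes h: "h > 0" and k: "k > 0" and c: "coprime h k"
  shows "2*(\<Sum>j=1..k-1. j*((h*j) div k)) + (\<Sum>i=1..h-1. (k*i div h)^2 + (k*i div h)) = (h-1)*k*(k-1)"
proof -
  have neq: "k*i \<noteq> h*j" if i: "i \<in> {1..h-1}" and j: "j \<in> {1..k-1}" for i j
  proof
    assume "k*i = h*j"
    then have "k dvd h*j" by (metis dvd_triv_left)
    then show False using not_dvd_prod[OF k c j] by simp
  qed
  have s1: "j*((h*j) div k) = (\<Sum>i=1..h-1. if k*i < h*j then j else 0)" if j: "j \<in> {1..k-1}" for j
  proof -
    have lt: "h*j div k < h"
    proof -
      have "h*j < k*h" using j h by (simp add: algebra_simps)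
      then have "\<not> h \<le> h*j div k" using le_div_iff_int[OF k, of h "h*j"] by simp
      then show ?thesis by simp
    qed
    have "{i\<in>{1..h-1}. k*i < h*j} = {1..h*j div k}"
    proof (rule set_eqI)
      fix i
      show "i \<in> {i\<in>{1..h-1}. k*i < h*j} \<longleftrightarrow> i \<in> {1..h*j div k}"
        using le_div_iff_int[OF k, of i "h*j"] neq[of i j] j lt by force
    qed
    then have "(\<Sum>i=1..h-1. if k*i < h*j then j else 0) = (\<Sum>i\<in>{1..h*j div k}. j)"
      by (simp add: sum.inter_filter[symmetric])
    also have "\<dots> = j*(h*j div k)"
    proof -
      have "0 \<le> h*j" using j h by simp
      then have "0 \<le> h*j div k" using k by (simp add: pos_imp_zdiv_nonneg_iff)
      then show ?thesis by simp
    qed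
    finally show ?thesis by simp
  qed
  have s3: "2*(\<Sum>j=1..k-1. if k*i < h*j then j else 0) = k*(k-1) - ((k*i div h)^2 + (k*i div h))"
    if i: "i \<in> {1..h-1}" for i
  proof -
    define g where "g = k*i div h"
    have g0: "0 \<le> g" unfolding g_def using i h k by (simp add: pos_imp_zdiv_nonneg_iff)
    have gk: "g \<le> k-1"
    proof -
      have "k*i < h*k" using i k by (simp add: algebra_simps)
      then have "\<not> k \<le> g" unfolding g_def using le_div_iff_int[OF h, of k "k*i"] by (simp add: algebra_simps)
      then show ?thesis by simp
    qed
    have "{j\<in>{1..k-1}. k*i < h*j} = {g+1..k-1}"
    proof (rule set_eqI)
      fix j
      show "j \<in> {j\<in>{1..k-1}. k*i < h*j} \<longleftrightarrow> j \<in> {g+1..k-1}"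
        using le_div_iff_int[OF h, of j "k*i"] neq[of i j] i g0 unfolding g_def by force
    qed
    then have "(\<Sum>j=1..k-1. if k*i < h*j then j else 0) = (\<Sum>j=g+1..k-1. j)"
      by (simp add: sum.inter_filter[symmetric])
    moreover have "(\<Sum>j=1..k-1. j) = (\<Sum>j=1..g. j) + (\<Sum>j=g+1..k-1. j)"
    proof -
      have "{1..k-1} = {1..g} \<union> {g+1..k-1}" using g0 gk by auto
      moreover have "{1..g} \<inter> {g+1..k-1} = {}" by auto
      ultimately show ?thesis by (simp add: sum.union_disjoint)
    qed
    ultimately have "2*(\<Sum>j=1..k-1. if k*i < h*j then j else 0) = 2*(\<Sum>j=1..k-1. j) - 2*(\<Sum>j=1..g. j)" by simp
    also have "\<dots> = (k-1)*k - g*(g+1)" using sum_lin1[of k] sum_lin[of g] k g0 by simp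
    finally show ?thesis unfolding g_def by (simp add: algebra_simps power2_eq_square)
  qed
  have "2*(\<Sum>j=1..k-1. j*((h*j) div k)) = 2*(\<Sum>j=1..k-1. \<Sum>i=1..h-1. if k*i < h*j then j else 0)"
    using s1 by simp
  also have "(\<Sum>j=1..k-1. \<Sum>i=1..h-1. if k*i < h*j then j else 0) = (\<Sum>i=1..h-1. \<Sum>j=1..k-1. if k*i < h*j then j else 0)"
    by (rule sum.swap)
  also have "2*\<dots> = (\<Sum>i=1..h-1. 2*(\<Sum>j=1..k-1. if k*i < h*j then j else 0))"
    by (simp add: sum_distrib_left)
  also have "\<dots> = (\<Sum>i=1..h-1. k*(k-1) - ((k*i div h)^2 + (k*i div h)))"
    using s3 by simp
  also have "\<dots> = (h-1)*(k*(k-1)) - (\<Sum>i=1..h-1. (k*i div h)^2 + (k*i div h))"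
    using h by (simp add: sum_subtractf)
  finally show ?thesis by (simp add: algebra_simps)
qed

lemma alg_core:
  fixes h k Rk Rh A G2 G1 I2k I2h :: int
  assumes "Rk = h*I2k - k*A" "2*A + (G2 + G1) = (h-1)*k*(k-1)"
    "h^2*G2 = (k^2+1)*I2h - 2*k*Rh" "2*G1 = (k-1)*(h-1)"
    "6*I2k = (k-1)*k*(2*k-1)" "6*I2h = (h-1)*h*(2*h-1)"
  shows "12*h^2*Rk + 12*k^2*Rh = 3*h^2*k^2*(h+k-3) + h*k*(h^2+k^2+1)"
proof -
  have id: "12*h^2*Rk + 12*k^2*Rh - (3*h^2*k^2*(h+k-3) + h*k*(h^2+k^2+1))
    = 12*h^2*(Rk-(h*I2k-k*A)) - 6*h^2*k*(2*A+(G2+G1)-(h-1)*k*(k-1))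
      + 6*k*(h^2*G2-((k^2+1)*I2h-2*k*Rh)) + 3*h^2*k*(2*G1-(k-1)*(h-1))
      + 2*h^3*(6*I2k-(k-1)*k*(2*k-1)) + k*(k^2+1)*(6*I2h-(h-1)*h*(2*h-1))"
    by (simp add: algebra_simps power2_eq_square power3_eq_cube)
  have "12*h^2*Rk + 12*k^2*Rh - (3*h^2*k^2*(h+k-3) + h*k*(h^2+k^2+1)) = 0"
    unfolding id using assms by simp
  then show ?thesis by simp
qed

lemma recip_int:
  fixes h k :: int assumes h: "h > 0" and k: "k > 0" and c: "coprime h k"
  shows "12*h^2*R h k + 12*k^2*R k h = 3*h^2*k^2*(h+k-3) + h*k*(h^2+k^2+1)"
proof -
  have c': "coprime k h" using c by (simp add: coprime_commute)
  have l: "2*(\<Sum>j=1..k-1. j*((h*j) div k)) + ((\<Sum>i=1..h-1. (k*i div h)^2) + (\<Sum>i=1..h-1. (k*i div h))) = (h-1)*k*(k-1)"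
    using lattice[OF h k c] by (simp add: sum.distrib)
  show ?thesis
    by (rule alg_core[OF e1 l e4[OF h c'] e5[OF h c'] sum_sq1 sum_sq1]) (use h k in auto)
qed

lemma reciprocity:
  fixes h k :: int assumes h: "h > 0" and k: "k > 0" and c: "coprime h k"
  shows "S h k + S k h = of_int h / of_int k + of_int k / of_int h + 1 / (of_int h * of_int k) - 3"
proof -
  have c': "coprime k h" using c by (simp add: coprime_commute)
  have ri: "real_of_int (12*h^2*R h k + 12*k^2*R k h) = of_int (3*h^2*k^2*(h+k-3) + h*k*(h^2+k^2+1))"
    using recip_int[OF h k c] by simp
  have hh: "real_of_int h > 0" "real_of_int k > 0" using h k by auto
  define x where "x = real_of_int h"
  define y where "y = real_of_int k"
  define a where "a = real_of_int (R h k)"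
  define b where "b = real_of_int (R k h)"
  have ri': "12*x^2*a + 12*y^2*b = 3*x^2*y^2*(x+y-3) + x*y*(x^2+y^2+1)"
    using ri unfolding x_def y_def a_def b_def by simp
  have "S h k + S k h = 3*(4*a - y^2*(y-1))/y^2 + 3*(4*b - x^2*(x-1))/x^2"
    unfolding S_formula[OF k c] S_formula[OF h c'] x_def y_def a_def b_def by simp
  also have "\<dots> = (12*x^2*a + 12*y^2*b - 3*x^2*y^2*(y-1) - 3*x^2*y^2*(x-1)) / (x^2*y^2)"
    using hh unfolding x_def[symmetric] y_def[symmetric] by (simp add: field_simps)
  also have "\<dots> = (x*y*(x^2+y^2+1) - 3*x^2*y^2) / (x^2*y^2)"
    using ri' by (simp add: algebra_simps)
  also have "\<dots> = x/y + y/x + 1/(x*y) - 3"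
    using hh unfolding x_def[symmetric] y_def[symmetric] by (simp add: field_simps power2_eq_square)
  finally show ?thesis unfolding x_def y_def .
qed

lemma X_bound:
  fixes h k :: int assumes k: "k > 0" and c: "coprime h k"
  shows "\<bar>4 * R h k - k^2*(k-1)\<bar> \<le> 4 * R 1 k - k^2*(k-1)"
proof -
  have c1: "coprime (1::int) k" by simp
  let ?a = "\<lambda>j. 2*j-k" and ?b = "\<lambda>j. 2*((h*j) mod k)-k"
  have sq: "(\<Sum>j=1..k-1. (?b j)^2) = (\<Sum>j=1..k-1. (?a j)^2)"
    using sum_perm[OF k c, of "\<lambda>x. (2*x-k)^2"] by simp
  have one: "(\<Sum>j=1..k-1. (2*j-k)*(2*((1*j) mod k)-k)) = (\<Sum>j=1..k-1. (?a j)^2)"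
    by (rule sum.cong) (auto simp: power2_eq_square)
  have up: "2*(\<Sum>j=1..k-1. ?a j * ?b j) \<le> (\<Sum>j=1..k-1. (?a j)^2) + (\<Sum>j=1..k-1. (?b j)^2)"
  proof -
    have "\<And>j. 2*(?a j * ?b j) \<le> (?a j)^2 + (?b j)^2"
    proof -
      fix j
      have "0 \<le> (?a j - ?b j)^2" by simp
      then show "2*(?a j * ?b j) \<le> (?a j)^2 + (?b j)^2" by (simp add: power2_eq_square algebra_simps)
    qed
    then have "(\<Sum>j=1..k-1. 2*(?a j * ?b j)) \<le> (\<Sum>j=1..k-1. (?a j)^2 + (?b j)^2)" by (rule sum_mono)
    then show ?thesis by (simp add: sum_distrib_left sum.distrib)
  qed
  have lo: "-2*(\<Sum>j=1..k-1. ?a j * ?b j) \<le> (\<Sum>j=1..k-1. (?a j)^2) + (\<Sum>j=1..k-1. (?b j)^2)"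
  proof -
    have "\<And>j. -2*(?a j * ?b j) \<le> (?a j)^2 + (?b j)^2"
    proof -
      fix j
      have "0 \<le> (?a j + ?b j)^2" by simp
      then show "-2*(?a j * ?b j) \<le> (?a j)^2 + (?b j)^2" by (simp add: power2_eq_square algebra_simps)
    qed
    then have "(\<Sum>j=1..k-1. -2*(?a j * ?b j)) \<le> (\<Sum>j=1..k-1. (?a j)^2 + (?b j)^2)" by (rule sum_mono)
    then show ?thesis by (simp add: sum_distrib_left sum.distrib)
  qed
  define P where "P = (\<Sum>j=1..k-1. ?a j * ?b j)"
  define Q where "Q = (\<Sum>j=1..k-1. (?a j)^2)"
  have "4 * R h k - k^2*(k-1) = P" unfolding P_def using D_formula[OF k c] by simp
  moreover have "4 * R 1 k - k^2*(k-1) = Q" unfolding Q_def using D_formula[OF k c1] one by simp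
  moreover have "2*P \<le> 2*Q" "-2*P \<le> 2*Q" using up lo sq unfolding P_def Q_def by simp_all
  ultimately show ?thesis by linarith
qed

lemma S_bound:
  fixes h k :: int assumes k: "k > 0" and c: "coprime h k"
  shows "\<bar>S h k\<bar> \<le> S 1 k"
proof -
  have c1: "coprime (1::int) k" by simp
  have "\<bar>real_of_int (4 * R h k - k^2*(k-1))\<bar> \<le> real_of_int (4 * R 1 k - k^2*(k-1))"
    using X_bound[OF k c] by linarith
  then show ?thesis unfolding S_formula[OF k c] S_formula[OF k c1] using k
    by (simp add: abs_mult abs_divide divide_right_mono)
qed

lemma S_one:
  fixes k :: int assumes k: "k > 0"
  shows "S 1 k = of_int ((k-1)*(k-2)) / of_int k"
proof -
  have c1: "coprime (1::int) k" by simp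
  have "R 1 k = (\<Sum>j=1..k-1. j^2)" unfolding R_def by (rule sum.cong) (auto simp: power2_eq_square)
  then have "3*(4 * R 1 k - k^2*(k-1)) = k*((k-1)*(k-2))"
    using sum_sq1[of k] k by (simp add: algebra_simps power2_eq_square)
  then have e: "3*real_of_int (4 * R 1 k - k^2*(k-1)) = of_int k * of_int ((k-1)*(k-2))"
    by (metis of_int_mult of_int_numeral)
  have "3 * real_of_int (4 * R 1 k - k^2*(k-1)) / (of_int k)^2 = (of_int k * of_int ((k-1)*(k-2))) / (of_int k * of_int k)"
    using e by (simp add: power2_eq_square)
  also have "\<dots> = of_int ((k-1)*(k-2)) / of_int k" using k by simp
  finally show ?thesis unfolding S_formula[OF k c1] by simp
qed

lemma S_neg:
  fixes m n :: int assumes n: "n > 0" and c: "coprime m n"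
  shows "S (n-m) n = - S m n"
proof -
  have c': "coprime (n-m) n"
  proof (rule coprimeI)
    fix d assume "d dvd n-m" "d dvd n"
    then have "d dvd n - (n-m)" by (simp only: dvd_diff)
    then have "d dvd m" by simp
    show "is_unit d" using coprime_common_divisor[OF c \<open>d dvd m\<close> \<open>d dvd n\<close>] .
  qed
  have "(\<Sum>j=1..n-1. (2*j-n)*(2*(((n-m)*j) mod n)-n)) = (\<Sum>j=1..n-1. -((2*j-n)*(2*((m*j) mod n)-n)))"
  proof (rule sum.cong)
    fix j assume j: "j \<in> {1..n-1}"
    have nd: "\<not> n dvd m*j" using not_dvd_prod[OF n c j] .
    then have "(m*j) mod n \<noteq> 0" by (simp add: dvd_eq_mod_eq_0)
    have "(n-m)*j = -(m*j) + j*n" by (simp add: algebra_simps)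
    then have "((n-m)*j) mod n = (-(m*j) + j*n) mod n" by simp
    also have "\<dots> = (-(m*j)) mod n" by (rule mod_mult_self1)
    finally have "((n-m)*j) mod n = (-(m*j)) mod n" .
    also have "\<dots> = n - (m*j) mod n" using \<open>(m*j) mod n \<noteq> 0\<close> by (simp add: zmod_zminus1_eq_if)
    finally have eq: "((n-m)*j) mod n = n - (m*j) mod n" .
    show "(2*j-n)*(2*(((n-m)*j) mod n)-n) = -((2*j-n)*(2*((m*j) mod n)-n))"
      unfolding eq by (simp add: algebra_simps)
  qed simp
  then show ?thesis unfolding S_def ds_formula[OF n c] ds_formula[OF n c'] by (simp add: sum_negf)
qed

lemma ineqA:
  fixes x y :: real assumes y: "3 \<le> y" and xy: "2*y \<le> x-1"
  shows "y/x + x/y + 1/(x*y) - 3 + (y-1)*(y-2)/y < 2/x + x/2 + 1/(2*x) - 3"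
proof -
  have x0: "x > 0" "y > 0" using y xy by auto
  have m: "(y-3)*(2*y-x+1) \<le> 0" using y xy by (intro mult_nonneg_nonpos) auto
  have key: "0 < (x+1)*((x-5) - (y-3)*(2*y-x+1))" using m y xy by (intro mult_pos_pos) linarith+
  have id: "((2/x + x/2 + 1/(2*x) - 3) - (y/x + x/y + 1/(x*y) - 3 + (y-1)*(y-2)/y)) * (2*x*y)
      = (x+1)*((x-5) - (y-3)*(2*y-x+1))"
    using x0 by (simp add: field_simps)
  have "0 < ((2/x + x/2 + 1/(2*x) - 3) - (y/x + x/y + 1/(x*y) - 3 + (y-1)*(y-2)/y)) * (2*x*y)"
    using id key by simp
  moreover have "0 < 2*x*y" using x0 by simp
  ultimately have "0 < (2/x + x/2 + 1/(2*x) - 3) - (y/x + x/y + 1/(x*y) - 3 + (y-1)*(y-2)/y)"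
    by (rule zero_less_mult_pos2)
  then show ?thesis by simp
qed

lemma ineqB:
  fixes x y :: real assumes y: "1 \<le> y" and xy: "2*y \<le> x-3"
  shows "0 < (2/x + x/2 + 1/(2*x) - 3) + (y/x + x/y + 1/(x*y) - 3 - (y-1)*(y-2)/y)"
proof -
  have x0: "x > 0" "y > 0" using y xy by auto
  have m: "(y-1)*(2*y-x+3) \<le> 0" using y xy by (intro mult_nonneg_nonpos) auto
  have key: "0 < (x-1)*(-((y-1)*(2*y-x+3)) - (4*y - 3*x + 5))" using m y xy by (intro mult_pos_pos) linarith+
  have id: "((2/x + x/2 + 1/(2*x) - 3) + (y/x + x/y + 1/(x*y) - 3 - (y-1)*(y-2)/y)) * (2*x*y)
      = (x-1)*(-((y-1)*(2*y-x+3)) - (4*y - 3*x + 5))"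
    using x0 by (simp add: field_simps)
  have "0 < ((2/x + x/2 + 1/(2*x) - 3) + (y/x + x/y + 1/(x*y) - 3 - (y-1)*(y-2)/y)) * (2*x*y)"
    using id key by simp
  moreover have "0 < 2*x*y" using x0 by simp
  ultimately show ?thesis by (rule zero_less_mult_pos2)
qed

lemma S2:
  fixes n :: int assumes n: "n \<ge> 3" and o: "odd n"
  shows "S 2 n = 2/of_int n + of_int n/2 + 1/(2*of_int n) - 3"
proof -
  have c: "coprime 2 n" using o by simp
  have c': "coprime n 2" using o by simp
  have "\<bar>S n 2\<bar> \<le> S 1 2" using S_bound[OF _ c'] by simp
  moreover have "S 1 2 = 0" using S_one[of 2] by simp
  ultimately have z: "S n 2 = 0" by simp
  show ?thesis using reciprocity[of 2 n] c n z by simp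
qed

theorem theorem2:
  fixes n m :: int
  assumes "n \<ge> 3" and "odd n"
    and "3 \<le> m" and "m \<le> n - 1" and "gcd m n = 1" and "m \<noteq> (n + 1) div 2"
  shows "S 2 n > S m n"
proof -
  have n0: "n > 0" using assms(1) by simp
  have c: "coprime m n" using assms(5) by (simp add: coprime_iff_gcd_eq_1)
  obtain t where t: "n = 2*t+1" using assms(2) by (metis oddE)
  have mt: "m \<noteq> t+1" using assms(6) t by simp
  have s2: "S 2 n = 2/of_int n + of_int n/2 + 1/(2*of_int n) - 3" using S2 assms(1,2) .
  show ?thesis
  proof (cases "m \<le> t")
    case True
    have m0: "m > 0" using assms(3) by simp
    have c': "coprime n m" using c by (simp add: coprime_commute)
    have r: "S m n + S n m = of_int m / of_int n + of_int n / of_int m + 1 / (of_int m * of_int n) - 3"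
      using reciprocity[OF m0 n0 c] .
    have b: "\<bar>S n m\<bar> \<le> of_int ((m-1)*(m-2)) / of_int m" using S_bound[OF m0 c'] S_one[OF m0] by simp
    have "S m n \<le> of_int m / of_int n + of_int n / of_int m + 1 / (of_int n * of_int m) - 3 + (of_int m-1)*(of_int m-2) / of_int m"
      using r b by (simp add: algebra_simps)
    also have "\<dots> < S 2 n" unfolding s2
      by (rule ineqA) (use True assms(3) t in simp_all)
    finally show ?thesis .
  next
    case False
    define k where "k = n - m"
    have k0: "k > 0" "1 \<le> k" using assms(4) unfolding k_def by simp_all
    have k2: "2*k \<le> n - 3" using False mt t unfolding k_def by simp
    have ck: "coprime k n"
    proof (rule coprimeI)
      fix d assume "d dvd k" "d dvd n"
      then have "d dvd n - k" by (simp only: dvd_diff)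
      then have "d dvd m" unfolding k_def by simp
      show "is_unit d" using coprime_common_divisor[OF c \<open>d dvd m\<close> \<open>d dvd n\<close>] .
    qed
    have ck': "coprime n k" using ck by (simp add: coprime_commute)
    have neg: "S m n = - S k n" using S_neg[OF n0 ck] unfolding k_def by simp
    have r: "S k n + S n k = of_int k / of_int n + of_int n / of_int k + 1 / (of_int k * of_int n) - 3"
      using reciprocity[OF k0(1) n0 ck] .
    have b: "\<bar>S n k\<bar> \<le> of_int ((k-1)*(k-2)) / of_int k" using S_bound[OF k0(1) ck'] S_one[OF k0(1)] by simp
    have "S k n \<ge> of_int k / of_int n + of_int n / of_int k + 1 / (of_int n * of_int k) - 3 - (of_int k-1)*(of_int k-2) / of_int k"
      using r b by (simp add: algebra_simps)
    moreover have "(0::real) < (2/of_int n + of_int n/2 + 1/(2*of_int n) - 3) + (of_int k / of_int n + of_int n / of_int k + 1 / (of_int n * of_int k) - 3 - (of_int k-1)*(of_int k-2) / of_int k)"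
      by (rule ineqB) (use k0 k2 in simp_all)
    ultimately show ?thesis unfolding neg s2 by linarith
  qed
qed

end
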